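(* Let $p>1$. For every $x\in(0,1)$, (1) $\displaystyle \left(1+\frac{x^p}{p(1+p)}\right)x<\arcsin_p x<\frac{\pi_p}{2}\,x$; (2) $\displaystyle \left(1+\frac{1-x^p}{p(1+p)}\right)(1-x^p)^{1/p}<\arccos_p x<\frac{\pi_p}{2}\,(1-x^p)^{1/p}$; (3) $\displaystyle \frac{\bigl(p(1+p)(1+x^p)+x^p\bigr)x}{p(1+p)(1+x^p)^{1+1/p}}<\arctan_p x<2^{1/p}\,b_p\left(\frac{x^p}{1+x^p}\right)^{1/p}$.
   Context: For $p>1$ and $x\in(0,1)$: $\arcsin_p x=\int_0^x(1-t^p)^{-1/p}\,dt$, $\arctan_p x=\int_0^x(1+t^p)^{-1}\,dt$, and $\arccos_p x=\arcsin_p\bigl((1-x^p)^{1/p}\bigr)$. Further $\pi_p=\frac{2\pi}{p\sin(\pi/p)}$ (so that $\arcsin_p(1)=\pi_p/2$), and $b_p=2^{-1/p}F\left(\frac1p,\frac1p;1+\frac1p;\frac12\right)$, where $F(a,b;c;z)=\sum_{n\ge0}\frac{(a,n)(b,n)}{(c,n)}\frac{z^n}{n!}$ is the Gaussian hypergeometric function, $(a,n)=a(a+1)\cdots(a+n-1)$, $(a,0)=1$. *)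

theory Defs
  imports "HOL-Analysis.Analysis"
begin

definition arcsin_p :: "real \<Rightarrow> real \<Rightarrow> real" where
  "arcsin_p p x = integral {0..x} (\<lambda>t. (1 - t powr p) powr (-1/p))"

definition arctan_p :: "real \<Rightarrow> real \<Rightarrow> real" where
  "arctan_p p x = integral {0..x} (\<lambda>t. 1 / (1 + t powr p))"

definition arccos_p :: "real \<Rightarrow> real \<Rightarrow> real" where
  "arccos_p p x = arcsin_p p ((1 - x powr p) powr (1/p))"

definition pi_p :: "real \<Rightarrow> real" where
  "pi_p p = 2 * pi / (p * sin (pi / p))"

definition hypergeom_F :: "real \<Rightarrow> real \<Rightarrow> real \<Rightarrow> real \<Rightarrow> real" where
  "hypergeom_F a b c z =
     (\<Sum>n. pochhammer a n * pochhammer b n / pochhammer c n * z ^ n / fact n)"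

definition b_p :: "real \<Rightarrow> real" where
  "b_p p = 2 powr (-1/p) * hypergeom_F (1/p) (1/p) (1 + 1/p) (1/2)"

end

theory Submission
  imports Defs
begin

definition cc :: "real \<Rightarrow> nat \<Rightarrow> real" where
  "cc a n = pochhammer a n / fact n"

lemma cc_pos: "a > 0 \<Longrightarrow> cc a n > 0"
  unfolding cc_def by (simp add: pochhammer_pos)

lemma binom_ser:
  assumes "0 \<le> w" "w < 1"
  shows "(\<lambda>n. cc a n * w^n) sums (1 - w) powr (-a)"
proof -
  have "(\<lambda>n. ((-a) gchoose n) * (-w)^n) sums (1 + (-w)) powr (-a)"
    by (rule gen_binomial_real) (use assms in auto)
  moreover have "((-a) gchoose n) * (-w)^n = cc a n * w^n" for n
    unfolding cc_def gbinomial_pochhammer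
    by (simp add: power_minus[of w] field_simps)
  ultimately show ?thesis by simp
qed

lemma mc_sums:
  fixes g :: "nat \<Rightarrow> real \<Rightarrow> real"
  assumes gi: "\<And>n. (g n has_integral I n) S"
    and g0: "\<And>n t. t \<in> S \<Longrightarrow> 0 \<le> g n t"
    and gs: "\<And>t. t \<in> S \<Longrightarrow> (\<lambda>n. g n t) sums F t"
    and Fi: "F integrable_on S"
  shows "I sums integral S F"
proof -
  define f where "f k t = (\<Sum>n<k. g n t)" for k t
  have fi: "(f k has_integral (\<Sum>n<k. I n)) S" for k
    unfolding f_def by (intro has_integral_sum) (auto intro: gi)
  have le: "f k t \<le> F t" if "t \<in> S" for k t
  proof -
    have "(\<Sum>n<k. g n t) \<le> (\<Sum>n. g n t)"
      using gs[OF that] g0[OF that] by (intro sum_le_suminf) (auto simp: sums_iff)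
    then show ?thesis unfolding f_def using gs[OF that] by (simp add: sums_iff)
  qed
  have *: "F integrable_on S \<and> (\<lambda>k. integral S (f k)) \<longlonglongrightarrow> integral S F"
  proof (rule monotone_convergence_increasing)
    show "f k integrable_on S" for k using fi by blast
    show "f k t \<le> f (Suc k) t" if "t \<in> S" for k t
      unfolding f_def using g0[OF that] by simp
    show "(\<lambda>k. f k t) \<longlonglongrightarrow> F t" if "t \<in> S" for t
      using gs[OF that] unfolding f_def sums_def .
    have "\<bar>integral S (f k)\<bar> \<le> integral S F" for k
    proof -
      have "0 \<le> integral S (f k)"
        using fi by (intro has_integral_nonneg[OF integrable_integral]) (auto simp: f_def g0 sum_nonneg)
      moreover have "integral S (f k) \<le> integral S F"
        using fi Fi le by (intro integral_le) auto
      ultimately show ?thesis by simp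
    qed
    then show "bounded (range (\<lambda>k. integral S (f k)))"
      unfolding bounded_real by blast
  qed
  have "integral S (f k) = (\<Sum>n<k. I n)" for k using fi by blast
  with * show ?thesis unfolding sums_def by simp
qed

lemma pow_lt1: "0 \<le> t \<Longrightarrow> t < 1 \<Longrightarrow> (p::real) > 0 \<Longrightarrow> t powr p < 1"
  by (cases "t = 0") (auto simp: powr01_less_one)

lemma arcsin_ser:
  assumes p: "p > 1" and x: "0 \<le> x" "x < 1"
  shows "(\<lambda>n. x * (cc (1/p) n / (p*n+1) * (x powr p)^n)) sums arcsin_p p x"
proof -
  have "(\<lambda>n. x * (cc (1/p) n / (p*n+1) * (x powr p)^n)) sums
        integral {0..x} (\<lambda>t. (1 - t powr p) powr (-1/p))"
  proof (rule mc_sums[where g = "\<lambda>n t. cc (1/p) n * (t powr p)^n"])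
    fix n :: nat
    have pi: "((\<lambda>t. t powr (p*n)) has_integral x powr (p*n+1) / (p*n+1)) {0..x}"
      proof (rule has_integral_powr_from_0)
      show "-1 < p * real n" using p by (smt (verit) mult_nonneg_nonneg of_nat_0_le_iff)
    qed (use x in auto)
    have e: "x powr (p*n+1) = x * (x powr p)^n"
    proof (cases "x = 0")
      case False
      then show ?thesis using x by (simp add: powr_add powr_power mult_ac)
    qed simp
    have pi2: "((\<lambda>t. (t powr p)^n) has_integral x powr (p*n+1) / (p*n+1)) {0..x}"
      by (rule has_integral_spike_finite[OF _ _ pi, of "{0}"]) (auto simp: powr_power mult_ac)
    show "((\<lambda>t. cc (1/p) n * (t powr p)^n) has_integral x * (cc (1/p) n / (p*n+1) * (x powr p)^n)) {0..x}"
      using has_integral_mult_right[OF pi2, of "cc (1/p) n"] by (simp only: e) (simp add: field_simps)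
  next
    fix n t assume "t \<in> {0..x::real}"
    then show "0 \<le> cc (1/p) n * (t powr p)^n" using cc_pos[of "1/p" n] p by simp
  next
    fix t assume t: "t \<in> {0..x::real}"
    have "0 \<le> t powr p" "t powr p < 1" using t x p by (auto intro!: pow_lt1)
    from binom_ser[OF this, of "1/p"] 
    show "(\<lambda>n. cc (1/p) n * (t powr p)^n) sums (1 - t powr p) powr (-1/p)" by simp
  next
    have ci: "continuous_on {0..x} (\<lambda>t. t powr p)"
      by (intro continuous_on_powr' continuous_intros) (use p in auto)
    have "continuous_on {0..x} (\<lambda>t. (1 - t powr p) powr (-1/p))"
    proof (rule continuous_on_powr)
      show "continuous_on {0..x} (\<lambda>t. 1 - t powr p)" by (intro continuous_on_diff ci continuous_on_const)
      show "\<forall>t\<in>{0..x}. 1 - t powr p \<noteq> 0" using pow_lt1[of _ p] x p by fastforce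
    qed (rule continuous_on_const)
    then show "(\<lambda>t. (1 - t powr p) powr (-1/p)) integrable_on {0..x}"
      by (rule integrable_continuous_interval)
  qed
  then show ?thesis unfolding arcsin_p_def .
qed

lemma to01:
  fixes f :: "real \<Rightarrow> real"
  assumes "(f has_integral y) {0..1}"
  shows "(f has_integral y) {0..<1}"
proof (rule iffD1[OF has_integral_spike_set_eq assms])
  show "negligible {x \<in> {0..1} - {0..<1}. f x \<noteq> 0}"
    by (rule negligible_subset[of "{1}"]) auto
  show "negligible {x \<in> {0..<1} - {0..1}. f x \<noteq> 0}"
    by (rule negligible_subset[of "{}"]) auto
qed

lemma pw_aux: "(t::real) > 0 \<Longrightarrow> t powr (real n + a - 1) = t ^ n * t powr (a - 1)"
proof -
  assume t: "t > 0"
  have "t powr (real n + a - 1) = t powr (real n + (a - 1))" by (simp add: algebra_simps)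
  also have "\<dots> = t powr real n * t powr (a - 1)" by (rule powr_add)
  finally show ?thesis using t by (simp add: powr_realpow)
qed

lemma beta_ser:
  fixes a :: real
  assumes a: "0 < a" "a < 1"
  shows "(\<lambda>n. cc a n / (n + a)) sums Beta a (1 - a)"
proof -
  have B: "((\<lambda>t. t powr (a-1) * (1-t) powr ((1-a)-1)) has_integral Beta a (1-a)) {0..<1}"
    by (rule to01, rule has_integral_Beta_real) (use a in auto)
  have "(\<lambda>n. cc a n / (n + a)) sums integral {0..<1} (\<lambda>t. t powr (a-1) * (1-t) powr ((1-a)-1))"
  proof (rule mc_sums[where g = "\<lambda>n t. cc a n * t^n * t powr (a-1)"])
    fix n :: nat
    have "((\<lambda>t. t powr (n+a-1)) has_integral 1 powr (n+a-1+1) / (n+a-1+1)) {0..1}"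
      by (rule has_integral_powr_from_0) (use a in auto)
    then have pi: "((\<lambda>t. t powr (n+a-1)) has_integral 1 / (n+a)) {0..1}" by simp
    have pi2: "((\<lambda>t. t^n * t powr (a-1)) has_integral 1 / (n+a)) {0..1}"
      by (rule has_integral_spike_finite[OF _ _ pi, of "{0}"])
        (auto simp: pw_aux)
    show "((\<lambda>t. cc a n * t^n * t powr (a-1)) has_integral cc a n / (n + a)) {0..<1}"
      using has_integral_mult_right[OF to01[OF pi2], of "cc a n"] by (simp add: mult.assoc)
  next
    fix n t assume "t \<in> {0..<1::real}"
    then show "0 \<le> cc a n * t^n * t powr (a-1)" using cc_pos[of a n] a by simp
  next
    fix t assume t: "t \<in> {0..<1::real}"
    from sums_mult2[OF binom_ser[of t a], of "t powr (a-1)"] t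
    show "(\<lambda>n. cc a n * t^n * t powr (a-1)) sums (t powr (a-1) * (1-t) powr ((1-a)-1))"
      by (simp add: mult.commute)
  next
    show "(\<lambda>t. t powr (a-1) * (1-t) powr ((1-a)-1)) integrable_on {0..<1}"
      using B by blast
  qed
  with B show ?thesis by (simp add: integral_unique)
qed

lemma beta_refl:
  fixes a :: real
  assumes a: "0 < a" "a < 1"
  shows "Beta a (1 - a) = pi / sin (pi * a)"
proof -
  have "complex_of_real (Gamma a * Gamma (1 - a)) = complex_of_real (pi / sin (pi * a))"
  proof -
    have e1: "1 - complex_of_real a = complex_of_real (1-a)" by simp
    have e2: "complex_of_real pi * complex_of_real a = complex_of_real (pi*a)" by simp
    show ?thesis
      using Gamma_reflection_complex[of "complex_of_real a"] unfolding e1 e2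
      by (simp only: Gamma_complex_of_real sin_of_real) simp
  qed
  then show ?thesis unfolding Beta_def by (simp del: of_real_mult of_real_divide)
qed

lemma suminf_strict:
  fixes f g :: "nat \<Rightarrow> real"
  assumes "summable f" "summable g" "\<And>n. f n \<le> g n" "f i < g i"
  shows "suminf f < suminf g"
proof -
  have "sum (\<lambda>n. g n - f n) {..<0} < suminf (\<lambda>n. g n - f n)"
    by (rule sum_less_suminf2[of _ 0 i]) (use assms in \<open>auto intro: summable_diff\<close>)
  then show ?thesis using suminf_diff[OF assms(2,1)] by simp
qed

definition dd :: "real \<Rightarrow> nat \<Rightarrow> real" where
  "dd p n = cc (1/p) n / (p * n + 1)"

definition GG :: "real \<Rightarrow> real \<Rightarrow> real" where
  "GG p w = (\<Sum>n. dd p n * w^n)"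

lemma dd_pos: "p > 1 \<Longrightarrow> dd p n > 0"
proof -
  assume p: "p > 1"
  have "0 < p * n + 1" using p by (smt (verit) mult_nonneg_nonneg of_nat_0_le_iff)
  then show ?thesis unfolding dd_def using cc_pos[of "1/p" n] p by simp
qed

lemma dd_sums:
  assumes p: "p > 1"
  shows "dd p sums (pi_p p / 2)"
proof -
  have a: "0 < 1/p" "1/p < 1" using p by auto
  from sums_mult[OF beta_ser[OF a], of "1/p"]
  have "(\<lambda>n. 1/p * (cc (1/p) n / (n + 1/p))) sums (1/p * (pi / sin (pi * (1/p))))"
    using beta_refl[OF a] by simp
  moreover have "1/p * (cc (1/p) n / (n + 1/p)) = dd p n" for n
    unfolding dd_def using p by (simp add: field_simps)
  moreover have "pi_p p / 2 = pi / (p * sin (pi / p))"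
    unfolding pi_p_def by simp
  ultimately show ?thesis by simp
qed

lemma GG_summable:
  assumes p: "p > 1" and w: "0 \<le> w" "w \<le> 1"
  shows "summable (\<lambda>n. dd p n * w^n)"
proof (rule summable_comparison_test'[OF sums_summable[OF dd_sums[OF p]]])
  fix n :: nat
  have "w^n \<le> 1" using w by (simp add: power_le_one)
  then show "norm (dd p n * w^n) \<le> dd p n"
    using dd_pos[OF p, of n] w by (simp add: mult_left_le)
qed

lemma arcsin_GG:
  assumes p: "p > 1" and x: "0 \<le> x" "x < 1"
  shows "arcsin_p p x = x * GG p (x powr p)"
proof -
  have w: "0 \<le> x powr p" "x powr p \<le> 1" using pow_lt1[of x p] x p by auto
  have "(\<lambda>n. x * (dd p n * (x powr p)^n)) sums arcsin_p p x"
    using arcsin_ser[OF p x] unfolding dd_def by simp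
  moreover have "(\<lambda>n. x * (dd p n * (x powr p)^n)) sums (x * GG p (x powr p))"
    unfolding GG_def by (intro sums_mult summable_sums GG_summable[OF p w])
  ultimately show ?thesis using sums_unique2 by blast
qed

lemma dd01: "p > 1 \<Longrightarrow> dd p 0 = 1" "p > 1 \<Longrightarrow> dd p 1 = 1 / (p * (1 + p))"
  unfolding dd_def cc_def by (auto simp: field_simps)

lemma GG_lower:
  assumes p: "p > 1" and w: "0 < w" "w < 1"
  shows "1 + w / (p * (1 + p)) < GG p w"
proof -
  have "sum (\<lambda>n. dd p n * w^n) {..<2} < GG p w"
    unfolding GG_def
    by (rule sum_less_suminf[OF GG_summable]) (use p w dd_pos[OF p] in auto)
  moreover have "sum (\<lambda>n. dd p n * w^n) {..<2} = 1 + w / (p * (1 + p))"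
    using dd01[OF p] by (simp add: numeral_2_eq_2)
  ultimately show ?thesis by simp
qed

lemma GG_mono:
  assumes p: "p > 1" and w: "0 \<le> w" "w < v" "v \<le> 1"
  shows "GG p w < GG p v"
  unfolding GG_def
proof (rule suminf_strict[of _ _ 1])
  show "summable (\<lambda>n. dd p n * w^n)" by (rule GG_summable) (use p w in auto)
  show "summable (\<lambda>n. dd p n * v^n)" by (rule GG_summable) (use p w in auto)
  show "dd p n * w^n \<le> dd p n * v^n" for n
    using dd_pos[OF p, of n] w by (intro mult_left_mono power_mono) auto
  show "dd p 1 * w^1 < dd p 1 * v^1" using dd_pos[OF p, of 1] w by simp
qed

lemma GG_1: "p > 1 \<Longrightarrow> GG p 1 = pi_p p / 2"
  unfolding GG_def using dd_sums by (simp add: sums_iff)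

lemma f_cont:
  fixes p X :: real
  assumes p: "p > 1" and X: "X < 1"
  shows "continuous_on {0..X} (\<lambda>t. (1 - t powr p) powr (-1/p))"
proof -
  have ci: "continuous_on {0..X} (\<lambda>t. t powr p)"
    by (intro continuous_on_powr' continuous_intros) (use p in auto)
  show ?thesis
  proof (rule continuous_on_powr)
    show "continuous_on {0..X} (\<lambda>t. 1 - t powr p)" by (intro continuous_on_diff ci continuous_on_const)
    show "\<forall>t\<in>{0..X}. 1 - t powr p \<noteq> 0" using pow_lt1[of _ p] X p by fastforce
  qed (rule continuous_on_const)
qed

lemma h_deriv:
  fixes p x :: real
  assumes p: "p > 1" and x: "x > 0"
  shows "((\<lambda>x. x * (1 + x powr p) powr (-1/p)) has_real_derivative
           (1 + x powr p) powr (-1 - 1/p)) (at x)"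
proof -
  define u where "u = 1 + x powr p"
  have u: "u > 0" "u \<ge> 1" unfolding u_def by (auto simp: add_pos_nonneg)
  have d1: "((\<lambda>x. 1 + x powr p) has_real_derivative p * x powr (p - 1)) (at x)"
    using has_real_derivative_powr[OF x, of p] by (auto intro: derivative_eq_intros)
  have d2: "((\<lambda>x. (1 + x powr p) powr (-1/p)) has_real_derivative
             (-1/p) * u powr (-1/p - of_nat 1) * (p * x powr (p - 1))) (at x)"
    unfolding u_def by (rule DERIV_fun_powr[OF d1]) (simp add: add_pos_nonneg)
  have d3: "((\<lambda>x. x * (1 + x powr p) powr (-1/p)) has_real_derivative
             1 * u powr (-1/p) + ((-1/p) * u powr (-1/p - of_nat 1) * (p * x powr (p - 1))) * x) (at x)"
    using DERIV_mult[OF DERIV_ident d2] unfolding u_def by simp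
  have e1: "x powr (p - 1) * x = x powr p" using x by (simp add: powr_diff)
  have e2: "u powr (-1/p) = u powr (-1/p - 1) * u"
    using u by (simp add: powr_diff)
  have "1 * u powr (-1/p) + ((-1/p) * u powr (-1/p - of_nat 1) * (p * x powr (p - 1))) * x
        = u powr (-1/p - 1) * (u - x powr p)"
    using p unfolding e2 by (simp add: field_simps e1[symmetric])
  also have "\<dots> = u powr (-1 - 1/p)"
  proof -
    have "u - x powr p = 1" unfolding u_def by simp
    moreover have "-1/p - 1 = -1 - 1/(p::real)" by (simp add: algebra_simps)
    ultimately show ?thesis by (simp only: mult_1_right)
  qed
  finally show ?thesis using d3 unfolding u_def by simp
qed


lemma integrand_eq:
  fixes p x :: real
  assumes p: "p > 1" and x: "x \<ge> 0"
  shows "(1 + x powr p) powr (-1 - 1/p) *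
           (1 - (x * (1 + x powr p) powr (-1/p)) powr p) powr (-1/p) = 1 / (1 + x powr p)"
proof -
  define u where "u = 1 + x powr p"
  have u: "u > 0" unfolding u_def by (simp add: add_pos_nonneg)
  have "(x * u powr (-1/p)) powr p = x powr p * u powr (-1)"
    using p by (simp add: powr_mult powr_powr)
  also have "u powr (-1) = 1 / u" using u by (simp add: powr_minus divide_inverse)
  finally have "1 - (x * u powr (-1/p)) powr p = 1 - x powr p / u" by simp
  also have "\<dots> = 1 / u"
  proof -
    have xu: "x powr p = u - 1" unfolding u_def by simp
    show ?thesis unfolding xu using u by (simp add: field_simps)
  qed
  also have "\<dots> = u powr (-1)" using u by (simp add: powr_minus divide_inverse)
  finally have e: "1 - (x * u powr (-1/p)) powr p = u powr (-1)" .
  have a: "(1 - (x * u powr (-1/p)) powr p) powr (-1/p) = u powr (1/p)"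
    unfolding e powr_powr by simp
  have "u powr (-1 - 1/p) * u powr (1/p) = u powr (-1)"
    by (simp add: powr_add[symmetric])
  also have "\<dots> = 1/u" using u by (simp add: powr_minus divide_inverse)
  finally show ?thesis using a unfolding u_def by simp
qed

lemma arctan_arcsin:
  fixes p X :: real
  assumes p: "p > 1" and X: "0 \<le> X" "X < 1"
  shows "arctan_p p X = arcsin_p p (X * (1 + X powr p) powr (-1/p))"
proof -
  define h where "h x = x * (1 + x powr p) powr (-1/p)" for x
  define f where "f t = (1 - t powr p) powr (-1/p)" for t
  have hle: "0 \<le> h x \<and> h x \<le> x" if "0 \<le> x" for x
  proof -
    have "1 \<le> (1 + x powr p) powr (1/p)" using p by (intro ge_one_powr_ge_zero) auto
    moreover have "(1 + x powr p) powr (-1/p) = inverse ((1 + x powr p) powr (1/p))"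
      by (simp add: powr_minus[symmetric])
    ultimately have "(1 + x powr p) powr (-1/p) \<le> 1" "0 \<le> (1 + x powr p) powr (-1/p)"
      by (auto simp del: powr_minus_divide intro: inverse_le_1_iff[THEN iffD2])
    then show ?thesis unfolding h_def using that by (simp add: mult_left_le)
  qed
  have hc: "continuous_on {0..X} h"
  proof -
    have ci: "continuous_on {0..X} (\<lambda>t. t powr p)"
      by (intro continuous_on_powr' continuous_intros) (use p in auto)
    have "continuous_on {0..X} (\<lambda>t. (1 + t powr p) powr (-1/p))"
    proof (rule continuous_on_powr)
      show "continuous_on {0..X} (\<lambda>t. 1 + t powr p)" by (intro continuous_on_add ci continuous_on_const)
      show "\<forall>t\<in>{0..X}. 1 + t powr p \<noteq> 0" by (auto simp: add_nonneg_eq_0_iff)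
    qed (rule continuous_on_const)
    then show ?thesis unfolding h_def by (intro continuous_on_mult continuous_on_id)
  qed
  have sub: "((\<lambda>x. (1 + x powr p) powr (-1 - 1/p) *\<^sub>R f (h x)) has_integral integral {h 0..h X} f) {0..X}"
  proof (rule has_integral_substitution_strong[of "{0}" 0 X h 0 X f])
    show "h 0 \<le> h X" using hle[of 0] hle[OF X(1)] by (simp add: h_def)
    show "h ` {0..X} \<subseteq> {0..X}" using hle by fastforce
    show "continuous_on {0..X} f" unfolding f_def by (rule f_cont[OF p X(2)])
    show "continuous_on {0..X} h" by (rule hc)
    fix x assume "x \<in> {0..X} - {0}"
    then have x0: "x > 0" by auto
    show "(h has_field_derivative (1 + x powr p) powr (-1 - 1/p)) (at x within {0..X})"
      unfolding h_def by (rule has_field_derivative_at_within[OF h_deriv[OF p x0]])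
  qed (use X in auto)
  have "((\<lambda>x. 1 / (1 + x powr p)) has_integral integral {h 0..h X} f) {0..X}"
  proof (rule has_integral_spike_finite[OF _ _ sub])
    fix x assume "x \<in> {0..X} - {}"
    then show "1 / (1 + x powr p) = (1 + x powr p) powr (-1 - 1/p) *\<^sub>R f (h x)"
      unfolding f_def h_def using integrand_eq[OF p, of x] by simp
  qed (rule finite.emptyI)
  then have "arctan_p p X = integral {h 0..h X} f"
    unfolding arctan_p_def by (rule integral_unique)
  also have "\<dots> = arcsin_p p (h X)"
  proof -
    have "f = (\<lambda>t. (1 - t powr p) powr (-1/p))" by (rule ext) (simp add: f_def)
    then show ?thesis by (simp add: h_def arcsin_p_def)
  qed
  finally show ?thesis by (simp add: h_def)
qed

lemma poch_ratio:
  fixes a :: real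
  assumes a: "a > 0"
  shows "pochhammer a n / pochhammer (1 + a) n = a / (a + n)"
proof -
  have "a * pochhammer (a + 1) n = (a + n) * pochhammer a n"
    using pochhammer_rec[of a n] pochhammer_rec'[of a n] by simp
  moreover have "pochhammer (1 + a) n > 0" "a + n > 0" using a by (auto intro: pochhammer_pos)
  ultimately show ?thesis by (simp add: field_simps add.commute)
qed

lemma alg1: "(a::real) * a / c * w / d = (a / c) * (a / d) * w" by (simp add: field_simps)
lemma alg2: "(1 / q) * (a / d) * w = a / d / q * (w::real)" by simp

lemma bp_GG:
  fixes p :: real
  assumes p: "p > 1"
  shows "b_p p = 2 powr (-1/p) * GG p (1/2)"
proof -
  have "hypergeom_F (1/p) (1/p) (1 + 1/p) (1/2) = GG p (1/2)"
    unfolding hypergeom_F_def GG_def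
  proof (rule arg_cong[where f = suminf], rule ext)
    fix n
    have r: "pochhammer (1/p) n / pochhammer (1 + 1/p) n = (1/p) / (1/p + n)"
      by (rule poch_ratio) (use p in auto)
    have r2: "(1/p) / (1/p + n) = 1 / (p * n + 1)" using p by (simp add: field_simps)
    have "pochhammer (1/p) n * pochhammer (1/p) n / pochhammer (1 + 1/p) n * (1/2) ^ n / fact n
          = (pochhammer (1/p) n / pochhammer (1 + 1/p) n) * (pochhammer (1/p) n / fact n) * (1/2) ^ n"
      by (rule alg1)
    also have "\<dots> = dd p n * (1/2) ^ n"
      unfolding r r2 dd_def cc_def by (rule alg2)
    finally show "pochhammer (1/p) n * pochhammer (1/p) n / pochhammer (1 + 1/p) n * (1/2) ^ n / fact n
               = dd p n * (1/2) ^ n" .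
  qed
  then show ?thesis unfolding b_p_def by simp
qed

lemma part1:
  fixes p y :: real
  assumes p: "p > 1" and y: "0 < y" "y < 1"
  shows "(1 + y powr p / (p * (1 + p))) * y < arcsin_p p y \<and> arcsin_p p y < pi_p p / 2 * y"
proof -
  have w: "0 < y powr p" "y powr p < 1" using y p pow_lt1[of y p] by auto
  have e: "arcsin_p p y = y * GG p (y powr p)" by (rule arcsin_GG) (use p y in auto)
  have "1 + y powr p / (p * (1 + p)) < GG p (y powr p)" by (rule GG_lower[OF p w])
  moreover have "GG p (y powr p) < pi_p p / 2"
    using GG_mono[of p "y powr p" 1] p w GG_1[OF p] by simp
  ultimately show ?thesis unfolding e using y by (simp add: mult.commute)
qed

lemma alg3: fixes W p v x :: real assumes "W \<ge> 0" "p > 0" "v > 0"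
  shows "(p * (1 + p) * (1 + W) + W) * x / (p * (1 + p) * ((1 + W) * v)) = (1 + W / (1 + W) / (p * (1 + p))) * (x / v)"
proof -
  have a: "1 + W \<noteq> 0" "1 + p \<noteq> 0" "p \<noteq> 0" "v \<noteq> 0" using assms by auto
  have "(1 + W / (1 + W) / (p * (1 + p))) = (p * (1 + p) * (1 + W) + W) / (p * (1 + p) * (1 + W))"
    using a by (simp add: divide_simps)
  then show ?thesis by simp
qed

theorem theorem1p1:
  fixes p x :: real
  assumes "p > 1" and "0 < x" and "x < 1"
  shows "(1 + x powr p / (p * (1 + p))) * x < arcsin_p p x \<and>
         arcsin_p p x < pi_p p / 2 * x \<and>
         (1 + (1 - x powr p) / (p * (1 + p))) * (1 - x powr p) powr (1/p) < arccos_p p x \<and>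
         arccos_p p x < pi_p p / 2 * (1 - x powr p) powr (1/p) \<and>
         (p * (1 + p) * (1 + x powr p) + x powr p) * x
            / (p * (1 + p) * (1 + x powr p) powr (1 + 1/p)) < arctan_p p x \<and>
         arctan_p p x < 2 powr (1/p) * b_p p * (x powr p / (1 + x powr p)) powr (1/p)"
proof -
  note p = assms(1)
  define W where "W = x powr p"
  have W: "0 < W" "W < 1" unfolding W_def using assms pow_lt1[of x p] by auto
  have P1: "(1 + x powr p / (p * (1 + p))) * x < arcsin_p p x \<and> arcsin_p p x < pi_p p / 2 * x"
    by (rule part1) (use assms in auto)
  define y where "y = (1 - W) powr (1/p)"
  have y: "0 < y" "y < 1" unfolding y_def using W p by (auto simp: powr01_less_one)
  have yp: "y powr p = 1 - W" unfolding y_def using p W by (simp add: powr_powr)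
  have P2: "(1 + (1 - x powr p) / (p * (1 + p))) * (1 - x powr p) powr (1/p) < arccos_p p x \<and>
         arccos_p p x < pi_p p / 2 * (1 - x powr p) powr (1/p)"
    using part1[OF p y] unfolding yp unfolding arccos_p_def y_def W_def .
  define u where "u = 1 + W"
  have u: "u > 0" "u > 1" unfolding u_def using W by auto
  define z where "z = x * u powr (-1/p)"
  have at: "arctan_p p x = arcsin_p p z"
    unfolding z_def u_def W_def by (rule arctan_arcsin) (use assms in auto)
  have z0: "0 < z" unfolding z_def using assms u by simp
  have zp: "z powr p = W / u"
  proof -
    have "z powr p = x powr p * u powr (-1)"
      unfolding z_def using p by (simp add: powr_mult powr_powr)
    also have "u powr (-1) = 1 / u" using u by (simp add: powr_minus divide_inverse)
    finally show ?thesis unfolding W_def by simp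
  qed
  have zh: "W / u < 1/2" unfolding u_def using W by (simp add: field_simps)
  have z1: "z < 1"
  proof (rule ccontr)
    assume "\<not> z < 1"
    then have "1 \<le> z powr p" using p by (intro ge_one_powr_ge_zero) auto
    then show False using zh zp by simp
  qed
  have lo: "(1 + z powr p / (p * (1 + p))) * z < arcsin_p p z" using part1[OF p z0 z1] by simp
  have eqlo: "(p * (1 + p) * (1 + x powr p) + x powr p) * x
            / (p * (1 + p) * (1 + x powr p) powr (1 + 1/p)) = (1 + z powr p / (p * (1 + p))) * z"
  proof -
    define v where "v = u powr (1/p)"
    have v: "v > 0" unfolding v_def using u by simp
    have e1: "(1 + x powr p) powr (1 + 1/p) = u * v" unfolding v_def u_def W_def
      using u by (simp add: powr_add u_def W_def)
    have e2: "z = x / v" unfolding z_def v_def by (simp add: powr_minus divide_inverse)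
    show ?thesis unfolding zp unfolding e1 e2 u_def W_def
      by (rule alg3) (use v p in auto)
  qed
  have up: "arcsin_p p z < 2 powr (1/p) * b_p p * (x powr p / (1 + x powr p)) powr (1/p)"
  proof -
    have "arcsin_p p z = z * GG p (z powr p)" by (rule arcsin_GG) (use p z0 z1 in auto)
    also have "\<dots> < z * GG p (1/2)"
      using GG_mono[of p "z powr p" "1/2"] p zp zh z0 W u by simp
    also have "z * GG p (1/2) = 2 powr (1/p) * b_p p * (x powr p / (1 + x powr p)) powr (1/p)"
    proof -
      have "(x powr p / (1 + x powr p)) powr (1/p) = z"
      proof -
        have zz: "(z powr p) powr (1/p) = z" using z0 p by (simp add: powr_powr)
        show ?thesis using zz unfolding zp u_def W_def .
      qed
      moreover have "2 powr (1/p) * 2 powr (-1/p) = (1::real)"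
        by (simp add: powr_add[symmetric])
      ultimately show ?thesis unfolding bp_GG[OF p]
        by (metis mult.assoc mult.commute mult_1)
    qed
    finally show ?thesis .
  qed
  show ?thesis using P1 P2 lo eqlo up at by simp
qed

end
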